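(* For any population, set of $M$ units and budget $K$, the LEA algorithm uses $O\big(M\ln(2M/\delta)/\epsilon\big)$ samples and, with probability at least $1-\delta$, returns an allocation $\mathcal U_{\mathsf{LTK}}$ satisfying $$\frac{V_{\mathcal U_{\mathsf{LTK}}}}{V_{\mathcal U^*}}\ \ge\ 1-\frac{4\gamma\,\theta_K}{\gamma_1+\tau_K\theta_K}\sqrt{\epsilon},$$ where $\theta_K=\Pr_\tau\big[[\tau_K,\tau_K+2\rho]\big]$ and $\gamma_1=\frac1M\sum_{u:\tau(u)>\tau_K+2\rho}\tau(u)$.
   Context: There are $M$ units with pairwise distinct treatment effects $\tau(u)\in[0,1]$ and a budget $K\in\{1,\dots,M\}$; $\tau_K$ is the $K$-th largest value of $\tau(u)$; $\mathcal U^*$ is the set of the $K$ units with the largest $\tau(u)$; for a set $S$ of units $V_S=\sum_{u\in S}\tau(u)$. $\Pr_\tau[S]=|\{u:\tau(u)\in S\}|/M$. An estimation oracle, given $u$ and $\epsilon',\delta'$, returns $\hat\tau(u)$ with $|\hat\tau(u)-\tau(u)|\le\epsilon'$ with probability at least $1-\delta'$ at a cost of $O(\ln(2/\delta')/\epsilon'^2)$ samples. The LEA algorithm: input $M$ units, budget $K$, parameters $\epsilon,\delta,\gamma>0$ with $\gamma=\Theta(1)$; set $\rho=\gamma\sqrt\epsilon$; obtain a $(\rho,\delta/M)$-accurate estimate $\hat\tau(u)$ of each unit; output the $K$ units with the largest $\hat\tau(u)$. *)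

theory Defs
  imports "HOL-Probability.Probability"
begin

definition kth_largest :: "('u \<Rightarrow> real) \<Rightarrow> 'u set \<Rightarrow> nat \<Rightarrow> real" where
  "kth_largest \<tau> U K = rev (sorted_list_of_set (\<tau> ` U)) ! (K - 1)"

text \<open>The set of the K units with the largest tau (well defined since tau is injective on U).\<close>
definition top_units :: "('u \<Rightarrow> real) \<Rightarrow> 'u set \<Rightarrow> nat \<Rightarrow> 'u set" where
  "top_units \<tau> U K = {u \<in> U. kth_largest \<tau> U K \<le> \<tau> u}"

definition Val :: "('u \<Rightarrow> real) \<Rightarrow> 'u set \<Rightarrow> real" where
  "Val \<tau> S = (\<Sum>u\<in>S. \<tau> u)"

definition Pr_tau :: "('u \<Rightarrow> real) \<Rightarrow> 'u set \<Rightarrow> real set \<Rightarrow> real" where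
  "Pr_tau \<tau> U I = real (card {u \<in> U. \<tau> u \<in> I}) / real (card U)"

definition is_topK :: "('u \<Rightarrow> real) \<Rightarrow> 'u set \<Rightarrow> nat \<Rightarrow> 'u set \<Rightarrow> bool" where
  "is_topK f U K S \<longleftrightarrow> S \<subseteq> U \<and> card S = K \<and> (\<forall>u\<in>S. \<forall>v\<in>U - S. f v \<le> f u)"

end

theory Submission
  imports Defs
begin

lemma sorted_count_ge:
  fixes xs :: "real list"
  assumes "sorted xs" "distinct xs" "i < length xs"
  shows "card {x \<in> set xs. xs ! i \<le> x} = length xs - i"
proof -
  have sw: "sorted_wrt (<) xs" using assms by (simp add: strict_sorted_iff)
  have "{x \<in> set xs. xs ! i \<le> x} = (\<lambda>j. xs ! j) ` {i..<length xs}"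
  proof (rule set_eqI, rule iffI)
    fix x assume "x \<in> {x \<in> set xs. xs ! i \<le> x}"
    then obtain j where j: "j < length xs" "x = xs ! j" "xs ! i \<le> x" by (auto simp: in_set_conv_nth)
    have "i \<le> j"
    proof (rule ccontr)
      assume "\<not> i \<le> j" then have "xs ! j < xs ! i" using sw j assms(3) by (simp add: sorted_wrt_iff_nth_less)
      then show False using j by simp
    qed
    then show "x \<in> (\<lambda>j. xs ! j) ` {i..<length xs}" using j by auto
  next
    fix x assume "x \<in> (\<lambda>j. xs ! j) ` {i..<length xs}"
    then obtain j where j: "i \<le> j" "j < length xs" "x = xs ! j" by auto
    then show "x \<in> {x \<in> set xs. xs ! i \<le> x}" using assms(1) by (auto simp: sorted_nth_mono)
  qed
  moreover have "inj_on (\<lambda>j. xs ! j) {i..<length xs}"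
    using assms(2) by (auto simp: inj_on_def nth_eq_iff_index_eq)
  ultimately show ?thesis by (simp add: card_image)
qed

lemma kth_card_ge:
  assumes "finite U" "inj_on \<tau> U" "1 \<le> K" "K \<le> card U"
  shows "card {u \<in> U. kth_largest \<tau> U K \<le> \<tau> u} = K"
proof -
  define xs where "xs = sorted_list_of_set (\<tau> ` U)"
  have len: "length xs = card U" using assms by (simp add: xs_def card_image)
  have kl: "kth_largest \<tau> U K = xs ! (card U - K)"
    using assms len by (simp add: kth_largest_def xs_def[symmetric] rev_nth)
  have "{u \<in> U. kth_largest \<tau> U K \<le> \<tau> u} = {u \<in> U. \<tau> u \<in> {x \<in> set xs. xs ! (card U - K) \<le> x}}"
    using assms by (auto simp: xs_def kl)
  also have "card \<dots> = card {x \<in> set xs. xs ! (card U - K) \<le> x}"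
  proof -
    have "{x \<in> set xs. xs ! (card U - K) \<le> x} = \<tau> ` {u \<in> U. \<tau> u \<in> {x \<in> set xs. xs ! (card U - K) \<le> x}}"
      using assms by (auto simp: xs_def)
    then show ?thesis using assms by (metis (no_types, lifting) card_image inj_on_subset mem_Collect_eq subsetI)
  qed
  also have "\<dots> = K" using sorted_count_ge[of xs "card U - K"] assms len
    by (simp add: xs_def)
  finally show ?thesis .
qed

lemma kth_mem:
  assumes "finite U" "inj_on \<tau> U" "1 \<le> K" "K \<le> card U"
  shows "\<exists>u0\<in>U. \<tau> u0 = kth_largest \<tau> U K"
proof -
  define xs where "xs = sorted_list_of_set (\<tau> ` U)"
  have len: "length xs = card U" using assms by (simp add: xs_def card_image)
  have "kth_largest \<tau> U K \<in> set (rev xs)"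
    using assms len unfolding kth_largest_def xs_def[symmetric]
    by (metis One_nat_def Suc_le_eq diff_less length_rev less_le_trans nth_mem zero_less_one)
  then show ?thesis using assms by (auto simp: xs_def)
qed

lemma kth_card_gt:
  assumes "finite U" "inj_on \<tau> U" "1 \<le> K" "K \<le> card U"
  shows "card {u \<in> U. kth_largest \<tau> U K < \<tau> u} = K - 1"
proof -
  obtain u0 where u0: "u0 \<in> U" "\<tau> u0 = kth_largest \<tau> U K" using kth_mem[OF assms] by blast
  have "{u \<in> U. kth_largest \<tau> U K \<le> \<tau> u} = insert u0 {u \<in> U. kth_largest \<tau> U K < \<tau> u}"
    using u0 assms(2) by (auto simp: inj_on_def order_le_less)
  then have "K = Suc (card {u \<in> U. kth_largest \<tau> U K < \<tau> u})"
    using kth_card_ge[OF assms] u0 assms(1) by simp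
  then show ?thesis by simp
qed


lemma det_bound:
  fixes e \<tau> :: "'u \<Rightarrow> real"
  assumes fin: "finite U" and inj: "inj_on \<tau> U" and nn: "\<forall>u\<in>U. 0 \<le> \<tau> u"
    and K1: "1 \<le> K" and KU: "K \<le> card U" and rp: "0 < \<rho>"
    and acc: "\<forall>u\<in>U. \<bar>e u - \<tau> u\<bar> \<le> \<rho>"
    and top: "is_topK e U K S"
    and Vpos: "Val \<tau> (top_units \<tau> U K) > 0"
  shows "Val \<tau> S / Val \<tau> (top_units \<tau> U K) \<ge>
     1 - 4 * \<rho> * real (card {u \<in> U. \<tau> u \<in> {kth_largest \<tau> U K .. kth_largest \<tau> U K + 2 * \<rho>}})
       / (Val \<tau> {u \<in> U. \<tau> u > kth_largest \<tau> U K + 2 * \<rho>}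
          + real (card {u \<in> U. \<tau> u \<in> {kth_largest \<tau> U K .. kth_largest \<tau> U K + 2 * \<rho>}}) * kth_largest \<tau> U K)"
proof -
  define t where "t = kth_largest \<tau> U K"
  define T where "T = top_units \<tau> U K"
  define H where "H = {u \<in> U. \<tau> u > t + 2 * \<rho>}"
  define Th where "Th = {u \<in> U. \<tau> u \<in> {t .. t + 2 * \<rho>}}"
  define m where "m = card Th"
  define D where "D = Val \<tau> H + real m * t"
  have T_def': "T = {u \<in> U. t \<le> \<tau> u}" by (simp add: T_def top_units_def t_def)
  have cT: "card T = K" using kth_card_ge[OF fin inj K1 KU] by (simp add: T_def' t_def)
  have cG: "card {u \<in> U. t < \<tau> u} = K - 1" using kth_card_gt[OF fin inj K1 KU] by (simp add: t_def)
  have SU: "S \<subseteq> U" and cS: "card S = K" and Sord: "\<forall>u\<in>S. \<forall>v\<in>U - S. e v \<le> e u"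
    using top by (auto simp: is_topK_def)
  have finS: "finite S" using SU fin finite_subset by blast
  have HT: "H \<subseteq> T" using rp by (auto simp: H_def T_def')
  have ThTH: "Th = T - H" by (auto simp: Th_def T_def' H_def)
  have finT: "finite T" using fin by (simp add: T_def')
  have finH: "finite H" using fin by (simp add: H_def)
  have mK: "m = K - card H" using ThTH HT finH cT by (simp add: m_def card_Diff_subset)
  have HS: "H \<subseteq> S"
  proof
    fix u assume uH: "u \<in> H"
    show "u \<in> S"
    proof (rule ccontr)
      assume "u \<notin> S"
      then have uUS: "u \<in> U - S" using uH by (auto simp: H_def)
      have "S \<subseteq> {u \<in> U. t < \<tau> u}"
      proof
        fix s assume sS: "s \<in> S"
        have "e u \<le> e s" using Sord sS uUS by blast
        moreover have "\<tau> u - \<rho> \<le> e u" using acc uUS by force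
        moreover have "e s \<le> \<tau> s + \<rho>" using acc sS SU by force
        moreover have "\<tau> u > t + 2 * \<rho>" using uH by (simp add: H_def)
        ultimately show "s \<in> {u \<in> U. t < \<tau> u}" using sS SU by auto
      qed
      then have "card S \<le> K - 1" using cG card_mono fin by (metis (no_types, lifting) finite_subset mem_Collect_eq subsetI)
      then show False using cS K1 by simp
    qed
  qed
  have Slow: "\<forall>v\<in>S. t - 2 * \<rho> \<le> \<tau> v"
  proof
    fix v assume vS: "v \<in> S"
    show "t - 2 * \<rho> \<le> \<tau> v"
    proof (rule ccontr)
      assume lo: "\<not> t - 2 * \<rho> \<le> \<tau> v"
      then have vT: "v \<notin> T" using rp by (auto simp: T_def')
      show False
      proof (cases "T \<subseteq> S")
        case True
        then have "T = S" using card_subset_eq[OF finS True] cT cS by simp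
        then show False using vS vT by simp
      next
        case False
        then obtain w where w: "w \<in> T" "w \<notin> S" by blast
        have wU: "w \<in> U" using w by (simp add: T_def')
        have "e w \<le> e v" using Sord vS w wU by blast
        moreover have "\<tau> w - \<rho> \<le> e w" using acc wU by force
        moreover have "e v \<le> \<tau> v + \<rho>" using acc vS SU by force
        moreover have "t \<le> \<tau> w" using w by (simp add: T_def')
        ultimately show False using lo by linarith
      qed
    qed
  qed
  have cSH: "card (S - H) = m" using HS finH cS mK by (simp add: card_Diff_subset)
  have VS: "Val \<tau> S = Val \<tau> H + Val \<tau> (S - H)"
    using HS finS by (simp add: Val_def sum.subset_diff)
  have "Val \<tau> (S - H) \<ge> (\<Sum>u\<in>S - H. t - 2 * \<rho>)"
    unfolding Val_def by (rule sum_mono) (use Slow in auto)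
  then have VS2: "Val \<tau> S \<ge> D - 2 * \<rho> * m" using VS cSH by (simp add: D_def algebra_simps)
  have VT: "Val \<tau> T = Val \<tau> H + Val \<tau> Th"
    using HT finT ThTH by (simp add: Val_def sum.subset_diff)
  have "Val \<tau> Th \<le> (\<Sum>u\<in>Th. t + 2 * \<rho>)" unfolding Val_def by (rule sum_mono) (auto simp: Th_def)
  moreover have "Val \<tau> Th \<ge> (\<Sum>u\<in>Th. t)" unfolding Val_def by (rule sum_mono) (auto simp: Th_def)
  ultimately have VT1: "Val \<tau> T \<le> D + 2 * \<rho> * m" and VT2: "Val \<tau> T \<ge> D"
    using VT by (auto simp: D_def m_def algebra_simps)
  have VTp: "Val \<tau> T > 0" using Vpos by (simp add: T_def)
  have key: "Val \<tau> S \<ge> Val \<tau> T - 4 * \<rho> * m" using VS2 VT1 by linarith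
  have goal: "Val \<tau> S / Val \<tau> T \<ge> 1 - 4 * \<rho> * m / D"
  proof (cases "D > 0")
    case True
    have "1 - 4 * \<rho> * m / D \<le> 1 - 4 * \<rho> * m / Val \<tau> T"
      using True VT2 rp by (intro diff_left_mono divide_left_mono) auto
    also have "\<dots> = (Val \<tau> T - 4 * \<rho> * m) / Val \<tau> T" using VTp by (simp add: field_simps)
    also have "\<dots> \<le> Val \<tau> S / Val \<tau> T" using key VTp by (intro divide_right_mono) auto
    finally show ?thesis .
  next
    case False
    have VHnn: "Val \<tau> H \<ge> 0" unfolding Val_def using nn by (intro sum_nonneg) (auto simp: H_def)
    obtain u0 where u0: "u0 \<in> U" "\<tau> u0 = t" using kth_mem[OF fin inj K1 KU] t_def by auto
    have "u0 \<in> Th" using u0 rp by (simp add: Th_def)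
    then have "m \<ge> 1" using fin by (simp add: m_def Th_def Suc_le_eq card_gt_0_iff) blast
    have tnn: "t \<ge> 0" using u0 nn by auto
    have "real m * t \<ge> 0" using tnn by simp
    then have "real m * t = 0" using False VHnn D_def by linarith
    then have "t = 0" using \<open>m \<ge> 1\<close> by simp
    then have "T = U" using nn by (auto simp: T_def')
    then have "T = S" using card_subset_eq[OF fin SU] cS cT by simp
    moreover have "D = 0" using False VHnn \<open>real m * t \<ge> 0\<close> D_def by linarith
    ultimately show ?thesis using VTp by simp
  qed
  then show ?thesis unfolding D_def m_def Th_def H_def T_def t_def .
qed

theorem claim11:
  fixes U :: "'u set" and \<tau> :: "'u \<Rightarrow> real" and K :: nat
    and \<epsilon> \<delta> \<gamma> C :: real
    and P :: "'w measure"
    and est :: "real \<Rightarrow> real \<Rightarrow> 'u \<Rightarrow> 'w \<Rightarrow> real"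
    and cost :: "'u \<Rightarrow> real \<Rightarrow> real \<Rightarrow> real"
  assumes "prob_space P"
    and "finite U" and "U \<noteq> {}"
    and "inj_on \<tau> U"
    and "\<forall>u\<in>U. 0 \<le> \<tau> u \<and> \<tau> u \<le> 1"
    and "1 \<le> K" and "K \<le> card U"
    and "0 < \<epsilon>" and "0 < \<delta>" and "\<delta> < 1" and "0 < \<gamma>" and "0 < C"
    and est_meas: "\<And>e d u. 0 < e \<Longrightarrow> 0 < d \<Longrightarrow> d < 1 \<Longrightarrow> u \<in> U \<Longrightarrow>
                     est e d u \<in> borel_measurable P"
    and est_acc: "\<And>e d u. 0 < e \<Longrightarrow> 0 < d \<Longrightarrow> d < 1 \<Longrightarrow> u \<in> U \<Longrightarrow>
                     measure P {\<omega> \<in> space P. \<bar>est e d u \<omega> - \<tau> u\<bar> \<le> e} \<ge> 1 - d"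
    and est_cost: "\<And>e d u. 0 < e \<Longrightarrow> 0 < d \<Longrightarrow> d < 1 \<Longrightarrow> u \<in> U \<Longrightarrow>
                     cost u e d \<le> C * ln (2 / d) / e ^ 2"
    and "Val \<tau> (top_units \<tau> U K) > 0"
  shows "let M = card U; \<rho> = \<gamma> * sqrt \<epsilon>; \<tau>K = kth_largest \<tau> U K;
             \<theta>K = Pr_tau \<tau> U {\<tau>K .. \<tau>K + 2 * \<rho>};
             \<gamma>1 = (1 / real M) * (\<Sum>u\<in>{u \<in> U. \<tau> u > \<tau>K + 2 * \<rho>}. \<tau> u)
         in (\<Sum>u\<in>U. cost u \<rho> (\<delta> / real M)) \<le> (C / \<gamma> ^ 2) * real M * ln (2 * real M / \<delta>) / \<epsilon>
          \<and> (\<exists>A \<in> sets P. measure P A \<ge> 1 - \<delta> \<and>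
               (\<forall>\<omega> \<in> A. \<forall>S. is_topK (\<lambda>u. est \<rho> (\<delta> / real M) u \<omega>) U K S \<longrightarrow>
                  Val \<tau> S / Val \<tau> (top_units \<tau> U K)
                    \<ge> 1 - (4 * \<gamma> * \<theta>K / (\<gamma>1 + \<tau>K * \<theta>K)) * sqrt \<epsilon>))"
proof -
  define M where "M = card U"
  define \<rho> where "\<rho> = \<gamma> * sqrt \<epsilon>"
  define d where "d = \<delta> / real M"
  have Mpos: "real M \<ge> 1" using assms(2,3) by (simp add: M_def Suc_le_eq card_gt_0_iff)
  have rp: "\<rho> > 0" using assms by (simp add: \<rho>_def)
  have dp: "0 < d" "d < 1" using assms Mpos by (auto simp: d_def field_simps)
  have cost: "(\<Sum>u\<in>U. cost u \<rho> d) \<le> (C / \<gamma> ^ 2) * real M * ln (2 * real M / \<delta>) / \<epsilon>"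
  proof -
    have "(\<Sum>u\<in>U. cost u \<rho> d) \<le> (\<Sum>u\<in>U. C * ln (2 / d) / \<rho> ^ 2)"
      by (rule sum_mono) (use est_cost rp dp in auto)
    also have "\<dots> = real M * (C * ln (2 / d) / \<rho> ^ 2)" by (simp add: M_def)
    also have "\<dots> = (C / \<gamma> ^ 2) * real M * ln (2 * real M / \<delta>) / \<epsilon>"
      using assms Mpos by (simp add: d_def \<rho>_def power_mult_distrib field_simps)
    finally show ?thesis .
  qed
  interpret P: prob_space P by fact
  define B where "B u = {\<omega> \<in> space P. \<bar>est \<rho> d u \<omega> - \<tau> u\<bar> \<le> \<rho>}" for u
  define A where "A = (\<Inter>u\<in>U. B u)"
  have Bs: "B u \<in> sets P" if "u \<in> U" for u
  proof -
    have "est \<rho> d u \<in> borel_measurable P" using est_meas rp dp that by blast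
    then show ?thesis unfolding B_def by measurable
  qed
  have As: "A \<in> sets P" unfolding A_def using Bs assms(2,3) by (intro sets.finite_INT) auto
  have "space P - A = (\<Union>u\<in>U. space P - B u)" unfolding A_def using assms(3) by auto
  then have "P.prob (space P - A) \<le> (\<Sum>u\<in>U. P.prob (space P - B u))"
    using P.finite_measure_subadditive_finite[of U "\<lambda>u. space P - B u"] assms(2) Bs by auto
  also have "\<dots> \<le> (\<Sum>u\<in>U. d)"
  proof (rule sum_mono)
    fix u assume "u \<in> U"
    then show "P.prob (space P - B u) \<le> d"
      using P.prob_compl[OF Bs] est_acc[OF rp dp \<open>u \<in> U\<close>] by (simp add: B_def)
  qed
  also have "\<dots> = \<delta>" using Mpos by (simp add: d_def M_def)
  finally have PA: "P.prob A \<ge> 1 - \<delta>" using P.prob_compl[OF As] by simp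
  have good: "Val \<tau> S / Val \<tau> (top_units \<tau> U K)
     \<ge> 1 - (4 * \<gamma> * Pr_tau \<tau> U {kth_largest \<tau> U K .. kth_largest \<tau> U K + 2 * \<rho>}
          / ((1 / real M) * (\<Sum>u\<in>{u \<in> U. \<tau> u > kth_largest \<tau> U K + 2 * \<rho>}. \<tau> u)
             + kth_largest \<tau> U K * Pr_tau \<tau> U {kth_largest \<tau> U K .. kth_largest \<tau> U K + 2 * \<rho>})) * sqrt \<epsilon>"
    if "\<omega> \<in> A" "is_topK (\<lambda>u. est \<rho> d u \<omega>) U K S" for \<omega> S
  proof -
    have acc: "\<forall>u\<in>U. \<bar>est \<rho> d u \<omega> - \<tau> u\<bar> \<le> \<rho>" using that(1) by (auto simp: A_def B_def)
    have nn: "\<forall>u\<in>U. 0 \<le> \<tau> u" using assms(5) by auto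
    note db = det_bound[OF assms(2,4) nn assms(6,7) rp acc that(2) assms(16)]
    define t where "t = kth_largest \<tau> U K"
    define m where "m = card {u \<in> U. t \<le> \<tau> u \<and> \<tau> u \<le> t + 2 * \<rho>}"
    define VH where "VH = (\<Sum>u\<in>{u \<in> U. \<tau> u > t + 2 * \<rho>}. \<tau> u)"
    have eq: "(4 * \<gamma> * (real m / real M) / ((1 / real M) * VH + t * (real m / real M))) * sqrt \<epsilon>
        = 4 * \<rho> * real m / (VH + real m * t)"
    proof (cases "VH + real m * t = 0")
      case True
      then have "(1 / real M) * VH + t * (real m / real M) = 0" using Mpos by (simp add: field_simps)
      then show ?thesis using True by simp
    next
      case False
      then show ?thesis using Mpos by (simp add: \<rho>_def field_simps)
    qed
    show ?thesis using db assms(5) eq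
      by (simp add: Pr_tau_def Val_def t_def[symmetric] m_def[symmetric] VH_def[symmetric] M_def[symmetric])
  qed
  show ?thesis
    unfolding Let_def M_def[symmetric] \<rho>_def[symmetric] d_def[symmetric]
    using cost PA As good by blast
qed

end
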